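(* Let $G$ be a profinite group and suppose an element $g\in G$ has a countable Engel sink. Then there are positive integers $i,k$ and a coset $Nb$ of an open normal subgroup $N$ of $G$ such that $[[nb,{}_i g],g^k]=1$ for all $n\in N$.
   Context: Commutators are left-normed, $[a,b]=a^{-1}b^{-1}ab$, and $[x,{}_n g]=[x,g,\dots,g]$ with $g$ repeated $n$ times. An Engel sink of an element $g$ of a group $G$ is a set $\mathscr E(g)\subseteq G$ such that for every $x\in G$ there is a positive integer $n(x,g)$ with $[x,{}_n g]\in\mathscr E(g)$ for all $n\ge n(x,g)$. "Countable" means finite or denumerable. *)

theory Defs
  imports "HOL-Analysis.Analysis" "HOL-Algebra.Coset"
begin

definition topological_group :: "('a, 'b) monoid_scheme \<Rightarrow> 'a topology \<Rightarrow> bool" where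
  "topological_group G T \<longleftrightarrow> group G \<and> topspace T = carrier G \<and>
     continuous_map (prod_topology T T) T (\<lambda>(x, y). x \<otimes>\<^bsub>G\<^esub> y) \<and>
     continuous_map T T (\<lambda>x. inv\<^bsub>G\<^esub> x)"

definition totally_disconnected_space :: "'a topology \<Rightarrow> bool" where
  "totally_disconnected_space T \<longleftrightarrow> (\<forall>S. connectedin T S \<longrightarrow> (\<exists>a. S \<subseteq> {a}))"

definition profinite_group :: "('a, 'b) monoid_scheme \<Rightarrow> 'a topology \<Rightarrow> bool" where
  "profinite_group G T \<longleftrightarrow> topological_group G T \<and> compact_space T \<and>
     Hausdorff_space T \<and> totally_disconnected_space T"

definition gcomm :: "('a, 'b) monoid_scheme \<Rightarrow> 'a \<Rightarrow> 'a \<Rightarrow> 'a" where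
  "gcomm G a b = inv\<^bsub>G\<^esub> a \<otimes>\<^bsub>G\<^esub> inv\<^bsub>G\<^esub> b \<otimes>\<^bsub>G\<^esub> a \<otimes>\<^bsub>G\<^esub> b"

fun engel_comm :: "('a, 'b) monoid_scheme \<Rightarrow> 'a \<Rightarrow> nat \<Rightarrow> 'a \<Rightarrow> 'a" where
  "engel_comm G x 0 g = x"
| "engel_comm G x (Suc n) g = gcomm G (engel_comm G x n g) g"

definition engel_sink :: "('a, 'b) monoid_scheme \<Rightarrow> 'a \<Rightarrow> 'a set \<Rightarrow> bool" where
  "engel_sink G g E \<longleftrightarrow> E \<subseteq> carrier G \<and>
     (\<forall>x\<in>carrier G. \<exists>n0>0. \<forall>n\<ge>n0. engel_comm G x n g \<in> E)"

end

theory Submission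
  imports Defs
begin

lemma tg_mult_cont:
  assumes "topological_group G T" "continuous_map X T f" "continuous_map X T h"
  shows "continuous_map X T (\<lambda>x. f x \<otimes>\<^bsub>G\<^esub> h x)"
proof -
  have "continuous_map X T ((\<lambda>(x, y). x \<otimes>\<^bsub>G\<^esub> y) \<circ> (\<lambda>x. (f x, h x)))"
    by (rule continuous_map_compose[OF continuous_map_pairedI[OF assms(2,3)]])
      (use assms in \<open>simp add: topological_group_def\<close>)
  then show ?thesis by (simp add: o_def)
qed

lemma tg_inv_cont:
  assumes "topological_group G T" "continuous_map X T f"
  shows "continuous_map X T (\<lambda>x. inv\<^bsub>G\<^esub> f x)"
proof -
  have "continuous_map X T ((\<lambda>x. inv\<^bsub>G\<^esub> x) \<circ> f)"
    using assms unfolding topological_group_def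
    by (meson continuous_map_compose)
  then show ?thesis by (simp add: o_def)
qed

lemma tg_const:
  assumes "topological_group G T" "c \<in> carrier G"
  shows "continuous_map X T (\<lambda>x. c)"
  using assms unfolding topological_group_def by simp

lemma tg_engel_cont:
  assumes "topological_group G T" "g \<in> carrier G"
  shows "continuous_map T T (\<lambda>x. engel_comm G x i g)"
proof (induction i)
  case 0
  then show ?case by simp
next
  case (Suc i)
  have c: "continuous_map T T (\<lambda>x. g)" by (rule tg_const[OF assms])
  show ?case unfolding engel_comm.simps gcomm_def
    by (intro tg_mult_cont[OF assms(1)] tg_inv_cont[OF assms(1)] Suc c)
qed

lemma (in group) engel_closed:
  assumes "g \<in> carrier G" "x \<in> carrier G"
  shows "engel_comm G x i g \<in> carrier G"
  by (induction i) (auto simp: gcomm_def assms)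

lemma (in group) gcomm_conj:
  assumes "g \<in> carrier G" "a \<in> carrier G" "c \<in> carrier G"
    and comm: "c \<otimes>\<^bsub>G\<^esub> g = g \<otimes>\<^bsub>G\<^esub> c"
  shows "gcomm G (inv\<^bsub>G\<^esub> c \<otimes>\<^bsub>G\<^esub> a \<otimes>\<^bsub>G\<^esub> c) g = inv\<^bsub>G\<^esub> c \<otimes>\<^bsub>G\<^esub> gcomm G a g \<otimes>\<^bsub>G\<^esub> c"
proof -
  have i: "inv (inv c \<otimes> a \<otimes> c) = inv c \<otimes> inv a \<otimes> c"
    using assms by (simp add: inv_mult_group m_assoc)
  have k0: "inv g \<otimes> inv c = inv c \<otimes> inv g"
    using assms by (metis inv_mult_group)
  have k: "c \<otimes> inv g \<otimes> inv c = inv g"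
    using assms by (simp add: m_assoc k0 flip: m_assoc[of c "inv c"])
  have "gcomm G (inv c \<otimes> a \<otimes> c) g = inv c \<otimes> inv a \<otimes> (c \<otimes> inv g \<otimes> inv c) \<otimes> a \<otimes> (c \<otimes> g)"
    unfolding gcomm_def i using assms(1-3) by (simp add: m_assoc)
  also have "\<dots> = inv c \<otimes> (inv a \<otimes> inv g \<otimes> a \<otimes> g) \<otimes> c"
    unfolding k comm using assms(1-3) by (simp add: m_assoc)
  finally show ?thesis by (simp add: gcomm_def)
qed

lemma (in group) engel_conj:
  assumes "g \<in> carrier G" "a \<in> carrier G" "c \<in> carrier G"
    and comm: "c \<otimes>\<^bsub>G\<^esub> g = g \<otimes>\<^bsub>G\<^esub> c"
  shows "engel_comm G (inv\<^bsub>G\<^esub> c \<otimes>\<^bsub>G\<^esub> a \<otimes>\<^bsub>G\<^esub> c) i g = inv\<^bsub>G\<^esub> c \<otimes>\<^bsub>G\<^esub> engel_comm G a i g \<otimes>\<^bsub>G\<^esub> c"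
proof (induction i)
  case 0
  then show ?case by simp
next
  case (Suc i)
  then show ?case using gcomm_conj[OF assms(1) engel_closed[OF assms(1,2)] assms(3,4)] by simp
qed

lemma (in group) stab_normal:
  assumes "\<one> \<in> U"
  defines "N \<equiv> {h \<in> carrier G. \<forall>x\<in>carrier G. \<forall>y\<in>carrier G. (x \<otimes> h \<otimes> y \<in> U) = (x \<otimes> y \<in> U)}"
  shows "N \<lhd> G" "N \<subseteq> U"
proof -
  show "N \<subseteq> U"
  proof
    fix h assume "h \<in> N"
    then have "(\<one> \<otimes> h \<otimes> \<one> \<in> U) = (\<one> \<otimes> \<one> \<in> U)" unfolding N_def by blast
    then show "h \<in> U" using assms \<open>h \<in> N\<close> unfolding N_def by simp
  qed
  have sg: "subgroup N G"
  proof (rule subgroupI)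
    show "N \<subseteq> carrier G" unfolding N_def by blast
    show "N \<noteq> {}"
    proof -
      have "\<one> \<in> N" unfolding N_def by simp
      then show ?thesis by blast
    qed
  next
    fix a assume a: "a \<in> N"
    then have ac: "a \<in> carrier G" unfolding N_def by blast
    show "inv a \<in> N" unfolding N_def
    proof (intro CollectI conjI ballI)
      show "inv a \<in> carrier G" using ac by simp
      fix x y assume xy: "x \<in> carrier G" "y \<in> carrier G"
      have "(x \<otimes> a \<otimes> (inv a \<otimes> y) \<in> U) = (x \<otimes> (inv a \<otimes> y) \<in> U)"
        using a xy ac unfolding N_def by simp
      moreover have "x \<otimes> a \<otimes> (inv a \<otimes> y) = x \<otimes> y"
        using xy ac by (simp add: m_assoc flip: m_assoc[of a "inv a"])
      moreover have "x \<otimes> (inv a \<otimes> y) = x \<otimes> inv a \<otimes> y"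
        using xy ac by (simp add: m_assoc)
      ultimately show "(x \<otimes> inv a \<otimes> y \<in> U) = (x \<otimes> y \<in> U)" by simp
    qed
  next
    fix a b assume a: "a \<in> N" and b: "b \<in> N"
    then have ac: "a \<in> carrier G" "b \<in> carrier G" unfolding N_def by blast+
    show "a \<otimes> b \<in> N" unfolding N_def
    proof (intro CollectI conjI ballI)
      show "a \<otimes> b \<in> carrier G" using ac by simp
      fix x y assume xy: "x \<in> carrier G" "y \<in> carrier G"
      have "(x \<otimes> a \<otimes> (b \<otimes> y) \<in> U) = (x \<otimes> (b \<otimes> y) \<in> U)"
        using a xy ac unfolding N_def by simp
      moreover have "(x \<otimes> b \<otimes> y \<in> U) = (x \<otimes> y \<in> U)"
        using b xy ac unfolding N_def by simp
      moreover have "x \<otimes> a \<otimes> (b \<otimes> y) = x \<otimes> (a \<otimes> b) \<otimes> y"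
        using xy ac by (simp add: m_assoc)
      moreover have "x \<otimes> (b \<otimes> y) = x \<otimes> b \<otimes> y"
        using xy ac by (simp add: m_assoc)
      ultimately show "(x \<otimes> (a \<otimes> b) \<otimes> y \<in> U) = (x \<otimes> y \<in> U)" by simp
    qed
  qed
  show "N \<lhd> G" unfolding normal_inv_iff
  proof (intro conjI sg ballI)
    fix z h assume z: "z \<in> carrier G" and h: "h \<in> N"
    then have hc: "h \<in> carrier G" unfolding N_def by blast
    show "z \<otimes> h \<otimes> inv z \<in> N" unfolding N_def
    proof (intro CollectI conjI ballI)
      show "z \<otimes> h \<otimes> inv z \<in> carrier G" using z hc by simp
      fix x y assume xy: "x \<in> carrier G" "y \<in> carrier G"
      have "((x \<otimes> z) \<otimes> h \<otimes> (inv z \<otimes> y) \<in> U) = ((x \<otimes> z) \<otimes> (inv z \<otimes> y) \<in> U)"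
        using h xy z unfolding N_def by simp
      moreover have "(x \<otimes> z) \<otimes> h \<otimes> (inv z \<otimes> y) = x \<otimes> (z \<otimes> h \<otimes> inv z) \<otimes> y"
        using xy z hc by (simp add: m_assoc)
      moreover have "(x \<otimes> z) \<otimes> (inv z \<otimes> y) = x \<otimes> y"
        using xy z by (simp add: m_assoc flip: m_assoc[of z "inv z"])
      ultimately show "(x \<otimes> (z \<otimes> h \<otimes> inv z) \<otimes> y \<in> U) = (x \<otimes> y \<in> U)" by simp
    qed
  qed
qed

lemma stab_open:
  assumes pg: "profinite_group G T" and Uo: "openin T U" and Uc: "closedin T U"
  shows "openin T {h \<in> carrier G. \<forall>x\<in>carrier G. \<forall>y\<in>carrier G.
            (x \<otimes>\<^bsub>G\<^esub> h \<otimes>\<^bsub>G\<^esub> y \<in> U) = (x \<otimes>\<^bsub>G\<^esub> y \<in> U)}"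
proof -
  have tg: "topological_group G T" and cs: "compact_space T" and hs: "Hausdorff_space T"
    using pg unfolding profinite_group_def by auto
  have ts: "topspace T = carrier G" using tg unfolding topological_group_def by auto
  define P where "P = prod_topology T (prod_topology T T)"
  define m3 where "m3 = (\<lambda>p. fst p \<otimes>\<^bsub>G\<^esub> fst (snd p) \<otimes>\<^bsub>G\<^esub> snd (snd p))"
  define m2 where "m2 = (\<lambda>p::'a \<times> 'a \<times> 'a. fst p \<otimes>\<^bsub>G\<^esub> snd (snd p))"
  have c1: "continuous_map P T fst" unfolding P_def by (rule continuous_map_fst)
  have c2: "continuous_map P T (\<lambda>p. fst (snd p))" unfolding P_def
    using continuous_map_compose[OF continuous_map_snd continuous_map_fst] by (simp add: o_def)
  have c3: "continuous_map P T (\<lambda>p. snd (snd p))" unfolding P_def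
    using continuous_map_compose[OF continuous_map_snd continuous_map_snd] by (simp add: o_def)
  have cm3: "continuous_map P T m3" unfolding m3_def
    by (intro tg_mult_cont[OF tg] c1 c2 c3)
  have cm2: "continuous_map P T m2" unfolding m2_def
    by (intro tg_mult_cont[OF tg] c1 c2 c3)
  have Uc': "closedin T (topspace T - U)" using Uo by blast
  define C where "C = ({p \<in> topspace P. m3 p \<in> U} \<inter> {p \<in> topspace P. m2 p \<in> topspace T - U}) \<union>
     ({p \<in> topspace P. m3 p \<in> topspace T - U} \<inter> {p \<in> topspace P. m2 p \<in> U})"
  have Ccl: "closedin P C" unfolding C_def
    by (intro closedin_Un closedin_Int closedin_continuous_map_preimage[OF cm3]
        closedin_continuous_map_preimage[OF cm2] Uc Uc')
  have csP: "compact_space P" unfolding P_def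
    using cs by (simp add: compact_space_prod_topology)
  have "compactin P C" by (rule closedin_compact_space[OF csP Ccl])
  then have "compactin T ((\<lambda>p. fst (snd p)) ` C)" by (rule image_compactin[OF _ c2])
  then have Kcl: "closedin T ((\<lambda>p. fst (snd p)) ` C)" by (rule compactin_imp_closedin[OF hs])
  have eq: "{h \<in> carrier G. \<forall>x\<in>carrier G. \<forall>y\<in>carrier G.
            (x \<otimes>\<^bsub>G\<^esub> h \<otimes>\<^bsub>G\<^esub> y \<in> U) = (x \<otimes>\<^bsub>G\<^esub> y \<in> U)} = topspace T - (\<lambda>p. fst (snd p)) ` C"
  proof -
    have Usub: "U \<subseteq> carrier G" using Uo ts openin_subset by blast
    have mc: "\<And>a b. a \<in> carrier G \<Longrightarrow> b \<in> carrier G \<Longrightarrow> a \<otimes>\<^bsub>G\<^esub> b \<in> carrier G"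
      using tg unfolding topological_group_def by (meson group.is_monoid monoid.m_closed)
    have tsP: "topspace P = carrier G \<times> carrier G \<times> carrier G" by (simp add: P_def ts)
    have memC: "\<And>x h y. x \<in> carrier G \<Longrightarrow> h \<in> carrier G \<Longrightarrow> y \<in> carrier G \<Longrightarrow>
       ((x, h, y) \<in> C) = ((x \<otimes>\<^bsub>G\<^esub> h \<otimes>\<^bsub>G\<^esub> y \<in> U) \<noteq> (x \<otimes>\<^bsub>G\<^esub> y \<in> U))"
      using Usub mc unfolding C_def tsP m3_def m2_def ts by auto
    have Csub: "C \<subseteq> carrier G \<times> carrier G \<times> carrier G"
      unfolding C_def tsP by auto
    show ?thesis
    proof (intro subset_antisym subsetI)
      fix h assume h: "h \<in> {h \<in> carrier G. \<forall>x\<in>carrier G. \<forall>y\<in>carrier G.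
            (x \<otimes>\<^bsub>G\<^esub> h \<otimes>\<^bsub>G\<^esub> y \<in> U) = (x \<otimes>\<^bsub>G\<^esub> y \<in> U)}"
      have "h \<notin> (\<lambda>p. fst (snd p)) ` C"
      proof
        assume "h \<in> (\<lambda>p. fst (snd p)) ` C"
        then obtain x y where "(x, h, y) \<in> C" by force
        moreover then have "x \<in> carrier G" "y \<in> carrier G" using Csub by auto
        ultimately show False using memC h by auto
      qed
      then show "h \<in> topspace T - (\<lambda>p. fst (snd p)) ` C" using h ts by auto
    next
      fix h assume h: "h \<in> topspace T - (\<lambda>p. fst (snd p)) ` C"
      have "\<forall>x\<in>carrier G. \<forall>y\<in>carrier G. (x \<otimes>\<^bsub>G\<^esub> h \<otimes>\<^bsub>G\<^esub> y \<in> U) = (x \<otimes>\<^bsub>G\<^esub> y \<in> U)"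
      proof (intro ballI)
        fix x y assume xy: "x \<in> carrier G" "y \<in> carrier G"
        have "(x, h, y) \<notin> C"
        proof
          assume "(x, h, y) \<in> C"
          then have "h \<in> (\<lambda>p. fst (snd p)) ` C" by force
          then show False using h by blast
        qed
        then show "(x \<otimes>\<^bsub>G\<^esub> h \<otimes>\<^bsub>G\<^esub> y \<in> U) = (x \<otimes>\<^bsub>G\<^esub> y \<in> U)"
          using memC xy h ts by auto
      qed
      then show "h \<in> {h \<in> carrier G. \<forall>x\<in>carrier G. \<forall>y\<in>carrier G.
            (x \<otimes>\<^bsub>G\<^esub> h \<otimes>\<^bsub>G\<^esub> y \<in> U) = (x \<otimes>\<^bsub>G\<^esub> y \<in> U)}" using h ts by auto
    qed
  qed
  show ?thesis unfolding eq using Kcl by blast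
qed

lemma clopen_nbhd:
  assumes pg: "profinite_group G T" and Wo: "openin T W" and w1: "\<one>\<^bsub>G\<^esub> \<in> W"
  obtains U where "openin T U" "closedin T U" "\<one>\<^bsub>G\<^esub> \<in> U" "U \<subseteq> W"
proof -
  have tg: "topological_group G T" and cs: "compact_space T" and hs: "Hausdorff_space T"
    and td: "totally_disconnected_space T"
    using pg unfolding profinite_group_def by auto
  have ts: "topspace T = carrier G" and grp: "group G" using tg unfolding topological_group_def by auto
  have one: "\<one>\<^bsub>G\<^esub> \<in> topspace T" using ts grp by (simp add: group.is_monoid monoid.one_closed)
  have "connectedin T (connected_component_of_set T \<one>\<^bsub>G\<^esub>)"
    by (rule connectedin_connected_component_of)
  then obtain a where "connected_component_of_set T \<one>\<^bsub>G\<^esub> \<subseteq> {a}"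
    using td unfolding totally_disconnected_space_def by blast
  moreover have "\<one>\<^bsub>G\<^esub> \<in> connected_component_of_set T \<one>\<^bsub>G\<^esub>"
    using one by (simp add: connected_component_of_refl)
  ultimately have ceq: "connected_component_of_set T \<one>\<^bsub>G\<^esub> = {\<one>\<^bsub>G\<^esub>}" by blast
  have cc: "{\<one>\<^bsub>G\<^esub>} \<in> connected_components_of T"
    using connected_component_in_connected_components_of[of T "\<one>\<^bsub>G\<^esub>"] one ceq by simp
  obtain U V where "openin T U" "openin T V" "disjnt U V" "U \<union> V = topspace T" "{\<one>\<^bsub>G\<^esub>} \<subseteq> U" "U \<subseteq> W"
    using wilder_locally_compact_component_thm[OF compact_imp_locally_compact_space[OF cs] hs cc _ Wo]
      one w1 by auto
  moreover have "closedin T U"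
  proof -
    have "U = topspace T - V" using \<open>disjnt U V\<close> \<open>U \<union> V = topspace T\<close> by (auto simp: disjnt_iff)
    then show ?thesis using \<open>openin T V\<close> by blast
  qed
  ultimately show ?thesis using that by blast
qed

lemma (in group) pow_diff_helper:
  assumes "g \<in> carrier G" "x \<in> carrier G" "(a::nat) < c"
  shows "g [^] c \<otimes> inv x \<otimes> inv (g [^] a \<otimes> inv x) = g [^] (c - a)"
proof -
  have gc: "g [^] c = g [^] (c - a) \<otimes> g [^] a"
    using assms by (simp add: nat_pow_mult)
  have "g [^] c \<otimes> inv x \<otimes> inv (g [^] a \<otimes> inv x) = g [^] c \<otimes> (inv x \<otimes> x) \<otimes> inv (g [^] a)"
    using assms by (simp add: inv_mult_group m_assoc) (simp add: m_assoc[symmetric])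
  also have "\<dots> = g [^] (c - a) \<otimes> (g [^] a \<otimes> inv (g [^] a))"
    using assms by (simp add: gc m_assoc)
  also have "\<dots> = g [^] (c - a)" using assms by simp
  finally show ?thesis .
qed

lemma (in group) final_step:
  assumes N: "N \<lhd> G" and b: "b \<in> carrier G" and g: "g \<in> carrier G"
    and gk: "g [^] (k::nat) \<in> N" and n: "n \<in> N"
    and const: "\<forall>n\<in>N. engel_comm G (n \<otimes> b) i g = e"
  shows "gcomm G (engel_comm G (n \<otimes> b) i g) (g [^] k) = \<one>"
proof -
  interpret normal N G by fact
  define c where "c = g [^] k"
  have cc: "c \<in> carrier G" unfolding c_def using g by simp
  have comm: "c \<otimes> g = g \<otimes> c" unfolding c_def using g
    by (metis nat_pow_Suc nat_pow_Suc2)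
  have nc: "n \<in> carrier G" using n by (rule mem_carrier)
  define x where "x = n \<otimes> b"
  have xc: "x \<in> carrier G" unfolding x_def using nc b by simp
  have cN: "c \<in> N" unfolding c_def by (rule gk)
  have n'N: "inv c \<otimes> n \<otimes> (b \<otimes> c \<otimes> inv b) \<in> N"
    using cN n b by (intro m_closed m_inv_closed inv_op_closed2) auto
  have n'eq: "inv c \<otimes> n \<otimes> (b \<otimes> c \<otimes> inv b) \<otimes> b = inv c \<otimes> x \<otimes> c"
    unfolding x_def using cc nc b by (simp add: m_assoc)
  have ec: "e \<in> carrier G" using const n engel_closed[OF g xc] unfolding x_def by auto
  have "engel_comm G (inv c \<otimes> x \<otimes> c) i g = e"
    using const n'N n'eq by metis
  moreover have "engel_comm G (inv c \<otimes> x \<otimes> c) i g = inv c \<otimes> e \<otimes> c"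
    using engel_conj[OF g xc cc comm] const n unfolding x_def by simp
  ultimately have ce: "inv c \<otimes> e \<otimes> c = e" by simp
  have "gcomm G e c = inv e \<otimes> (inv c \<otimes> e \<otimes> c)"
    unfolding gcomm_def using ec cc by (simp add: m_assoc)
  also have "\<dots> = \<one>" using ce ec by simp
  finally show ?thesis using const n unfolding c_def by simp
qed

theorem lemma2p7:
  fixes G :: "('a, 'b) monoid_scheme" and T :: "'a topology" and g :: 'a
  assumes "profinite_group G T"
    and "g \<in> carrier G"
    and "\<exists>E. countable E \<and> engel_sink G g E"
  shows "\<exists>i k N b. i > 0 \<and> k > 0 \<and> N \<lhd> G \<and> openin T N \<and> b \<in> carrier G \<and>
           (\<forall>n\<in>N. gcomm G (engel_comm G (n \<otimes>\<^bsub>G\<^esub> b) i g) (g [^]\<^bsub>G\<^esub> (k::nat)) = \<one>\<^bsub>G\<^esub>)"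
proof -
  note pg = assms(1) and g = assms(2)
  obtain E where Ec: "countable E" and sink: "engel_sink G g E" using assms(3) by blast
  have tg: "topological_group G T" and cs: "compact_space T" and hs: "Hausdorff_space T"
    using pg unfolding profinite_group_def by auto
  have ts: "topspace T = carrier G" and grp: "group G" using tg unfolding topological_group_def by auto
  have EG: "E \<subseteq> carrier G" using sink unfolding engel_sink_def by blast
  have one: "\<one>\<^bsub>G\<^esub> \<in> carrier G" using grp by (simp add: group.is_monoid monoid.one_closed)
  define F where "F = (\<lambda>(i, e). {x \<in> topspace T. engel_comm G x i g = e})"
  define \<G> where "\<G> = F ` ({i::nat. 0 < i} \<times> E)"
  have Gc: "countable \<G>" unfolding \<G>_def using Ec by (intro countable_image countable_SIGMA) auto
  have Fcl: "closedin T (F p)" if pm: "p \<in> {i::nat. 0 < i} \<times> E" for p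
  proof -
    obtain i e where p: "p = (i, e)" "e \<in> E" using pm by (cases p) auto
    have "closedin T {x \<in> topspace T. engel_comm G x i g \<in> {e}}"
      using closedin_continuous_map_preimage[OF tg_engel_cont[OF tg g] closedin_Hausdorff_singleton[OF hs]]
        p EG ts by auto
    then show ?thesis unfolding F_def p by simp
  qed
  have cover: "\<Union>\<G> = topspace T"
  proof
    show "\<Union>\<G> \<subseteq> topspace T" unfolding \<G>_def F_def by auto
    show "topspace T \<subseteq> \<Union>\<G>"
    proof
      fix x assume x: "x \<in> topspace T"
      then obtain n0 where "n0 > 0" "\<forall>n\<ge>n0. engel_comm G x n g \<in> E"
        using sink ts unfolding engel_sink_def by blast
      then have "x \<in> F (n0, engel_comm G x n0 g)" "(n0, engel_comm G x n0 g) \<in> {i::nat. 0 < i} \<times> E"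
        using x unfolding F_def by auto
      then show "x \<in> \<Union>\<G>" unfolding \<G>_def by blast
    qed
  qed
  have "\<exists>A\<in>\<G>. T interior_of A \<noteq> {}"
  proof (rule ccontr)
    assume "\<not> ?thesis"
    then have "T interior_of \<Union>\<G> = {}"
      using Baire_category_alt[of T \<G>] Gc Fcl compact_imp_locally_compact_space[OF cs]
        locally_compact_Hausdorff_imp_regular_space[OF compact_imp_locally_compact_space[OF cs] hs]
      unfolding \<G>_def by blast
    then have "topspace T = {}" using cover by simp
    then show False using one ts by simp
  qed
  then obtain i e where ie: "i > 0" "e \<in> E" and Oint: "T interior_of F (i, e) \<noteq> {}"
    unfolding \<G>_def by auto
  define Om where "Om = T interior_of F (i, e)"
  obtain b where bO: "b \<in> Om" using Oint unfolding Om_def by blast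
  have Oo: "openin T Om" unfolding Om_def by simp
  have OF: "Om \<subseteq> F (i, e)" unfolding Om_def by (rule interior_of_subset)
  have bc: "b \<in> carrier G" using bO OF unfolding F_def ts by auto
  define W where "W = {h \<in> topspace T. h \<otimes>\<^bsub>G\<^esub> b \<in> Om}"
  have cb: "continuous_map T T (\<lambda>h. h \<otimes>\<^bsub>G\<^esub> b)"
    using tg_mult_cont[OF tg continuous_map_id tg_const[OF tg bc]] by simp
  have Wo: "openin T W" unfolding W_def
    by (rule openin_continuous_map_preimage[OF cb Oo])
  have W1: "\<one>\<^bsub>G\<^esub> \<in> W" unfolding W_def using one ts bO bc grp
    by (simp add: group.is_monoid monoid.l_one)
  obtain U where Uo: "openin T U" and Ucl: "closedin T U" and U1: "\<one>\<^bsub>G\<^esub> \<in> U" and UW: "U \<subseteq> W"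
    using clopen_nbhd[OF pg Wo W1] by blast
  define N where "N = {h \<in> carrier G. \<forall>x\<in>carrier G. \<forall>y\<in>carrier G.
            (x \<otimes>\<^bsub>G\<^esub> h \<otimes>\<^bsub>G\<^esub> y \<in> U) = (x \<otimes>\<^bsub>G\<^esub> y \<in> U)}"
  have Nn: "N \<lhd> G" "N \<subseteq> U" unfolding N_def using group.stab_normal[OF grp U1] by auto
  have No: "openin T N" unfolding N_def by (rule stab_open[OF pg Uo Ucl])
  have const: "\<forall>n\<in>N. engel_comm G (n \<otimes>\<^bsub>G\<^esub> b) i g = e"
  proof
    fix n assume "n \<in> N"
    then have "n \<otimes>\<^bsub>G\<^esub> b \<in> Om" using Nn UW unfolding W_def by auto
    then show "engel_comm G (n \<otimes>\<^bsub>G\<^esub> b) i g = e" using OF unfolding F_def by auto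
  qed
  define V where "V = (\<lambda>x. {y \<in> topspace T. y \<otimes>\<^bsub>G\<^esub> inv\<^bsub>G\<^esub> x \<in> N})"
  have Vo: "openin T (V x)" if "x \<in> carrier G" for x
  proof -
    have "inv\<^bsub>G\<^esub> x \<in> carrier G" using that grp by (simp add: group.inv_closed)
    then have cx: "continuous_map T T (\<lambda>h. h \<otimes>\<^bsub>G\<^esub> inv\<^bsub>G\<^esub> x)"
      using tg_mult_cont[OF tg continuous_map_id tg_const[OF tg]] by simp
    show ?thesis unfolding V_def by (rule openin_continuous_map_preimage[OF cx No])
  qed
  have Vcov: "topspace T \<subseteq> \<Union>(V ` carrier G)"
  proof
    fix y assume y: "y \<in> topspace T"
    then have "y \<otimes>\<^bsub>G\<^esub> inv\<^bsub>G\<^esub> y \<in> N" using ts grp Nn(1)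
      by (simp add: group.r_inv normal_imp_subgroup subgroup.one_closed)
    then show "y \<in> \<Union>(V ` carrier G)" using y ts unfolding V_def by blast
  qed
  obtain \<F> where Ff: "finite \<F>" and FV: "\<F> \<subseteq> V ` carrier G" and Fcov: "topspace T \<subseteq> \<Union>\<F>"
    using cs Vo Vcov unfolding compact_space_alt by (metis (no_types, lifting) imageE)
  define f where "f = (\<lambda>k::nat. SOME Y. Y \<in> \<F> \<and> g [^]\<^bsub>G\<^esub> k \<in> Y)"
  have fF: "f k \<in> \<F> \<and> g [^]\<^bsub>G\<^esub> k \<in> f k" for k
  proof -
    have "g [^]\<^bsub>G\<^esub> k \<in> topspace T" using ts g grp by (simp add: group.is_monoid monoid.nat_pow_closed)
    then have "\<exists>Y. Y \<in> \<F> \<and> g [^]\<^bsub>G\<^esub> k \<in> Y" using Fcov by blast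
    then show ?thesis unfolding f_def by (rule someI_ex)
  qed
  have "\<not> inj f"
  proof
    assume "inj f"
    moreover have "finite (range f)" using fF Ff by (meson finite_subset image_subsetI)
    ultimately show False using finite_imageD by (metis infinite_UNIV_nat)
  qed
  then obtain a c where ac: "a \<noteq> c" "f a = f c" unfolding inj_def by blast
  have "\<exists>a c. a < c \<and> f a = f c"
    using ac by (metis linorder_neqE_nat)
  then obtain a c where ac: "a < c" "f a = f c" by blast
  obtain x where xc: "x \<in> carrier G" and fa: "f a = V x" using fF[of a] FV by blast
  have "g [^]\<^bsub>G\<^esub> a \<otimes>\<^bsub>G\<^esub> inv\<^bsub>G\<^esub> x \<in> N" "g [^]\<^bsub>G\<^esub> c \<otimes>\<^bsub>G\<^esub> inv\<^bsub>G\<^esub> x \<in> N"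
    using fF[of a] fF[of c] ac fa unfolding V_def by auto
  then have "g [^]\<^bsub>G\<^esub> c \<otimes>\<^bsub>G\<^esub> inv\<^bsub>G\<^esub> x \<otimes>\<^bsub>G\<^esub> inv\<^bsub>G\<^esub> (g [^]\<^bsub>G\<^esub> a \<otimes>\<^bsub>G\<^esub> inv\<^bsub>G\<^esub> x) \<in> N"
    using Nn(1) by (meson normal_imp_subgroup subgroup.m_closed subgroup.m_inv_closed)
  then have gk: "g [^]\<^bsub>G\<^esub> (c - a) \<in> N"
    using group.pow_diff_helper[OF grp g xc ac(1)] by simp
  show ?thesis
  proof (intro exI conjI)
    show "0 < i" by fact
    show "0 < c - a" using ac by simp
    show "N \<lhd> G" by fact
    show "openin T N" by fact
    show "b \<in> carrier G" by fact
    show "\<forall>n\<in>N. gcomm G (engel_comm G (n \<otimes>\<^bsub>G\<^esub> b) i g) (g [^]\<^bsub>G\<^esub> (c - a)) = \<one>\<^bsub>G\<^esub>"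
      using group.final_step[OF grp Nn(1) bc g gk _ const] by blast
  qed
qed

end
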